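(* If $G=(V,E)$ is a finite connected bipartite graph and $P$ is a geodesic (shortest) path in $G$, then $P$ is $(1,1)$-guardable.
   Context: All graphs are finite, connected and reflexive (a loop at every vertex; moving along a loop means passing); loops are ignored for bipartiteness and distances. Cops and Attacking Robbers: the cop player places cops on vertices, then the robber chooses a vertex. In each round the cops move (each cop moves to an adjacent vertex or passes), then the robber moves (to an adjacent vertex or passes). A cop captures the robber by moving onto the robber's vertex. Additionally, if the robber moves onto a vertex occupied by a cop, exactly one cop on that vertex is removed from the game ("attacked"); the robber's initial placement on a cop's vertex does not count as an attack. A subgraph $H$ of $G$ is $(k,t)$-guardable if, in the Cops and Attacking Robbers game on $G$, $k+t$ cops can, in finitely many steps, move so that $k$ cops are placed on vertices of $H$ in such a way that from then on, if the robber ever moves into $H$, the cops immediately capture the robber (the $t$ extra cops are only needed to get the $k$ cops safely into position and are afterwards free). *)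

theory Defs
  imports Main "HOL-Library.Multiset"
begin

(* Graphs: the vertex set is the (finite) type 'v; E is the adjacency relation,
   assumed reflexive (loops) and symmetric. *)

definition reflexive_graph :: "('v \<Rightarrow> 'v \<Rightarrow> bool) \<Rightarrow> bool" where
  "reflexive_graph E \<longleftrightarrow> (\<forall>v. E v v) \<and> (\<forall>u v. E u v \<longrightarrow> E v u)"

definition connected_graph :: "('v \<Rightarrow> 'v \<Rightarrow> bool) \<Rightarrow> bool" where
  "connected_graph E \<longleftrightarrow> (\<forall>u v. E\<^sup>*\<^sup>* u v)"

definition bipartite_graph :: "('v \<Rightarrow> 'v \<Rightarrow> bool) \<Rightarrow> bool" where
  "bipartite_graph E \<longleftrightarrow> (\<exists>col :: 'v \<Rightarrow> bool. \<forall>u v. E u v \<and> u \<noteq> v \<longrightarrow> col u \<noteq> col v)"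

definition walk :: "('v \<Rightarrow> 'v \<Rightarrow> bool) \<Rightarrow> 'v list \<Rightarrow> bool" where
  "walk E xs \<longleftrightarrow> xs \<noteq> [] \<and> (\<forall>i. Suc i < length xs \<longrightarrow> E (xs ! i) (xs ! Suc i))"

definition gdist :: "('v \<Rightarrow> 'v \<Rightarrow> bool) \<Rightarrow> 'v \<Rightarrow> 'v \<Rightarrow> nat" where
  "gdist E u v = (LEAST n. \<exists>xs. walk E xs \<and> hd xs = u \<and> last xs = v \<and> length xs = Suc n)"

definition geodesic :: "('v \<Rightarrow> 'v \<Rightarrow> bool) \<Rightarrow> 'v list \<Rightarrow> bool" where
  "geodesic E P \<longleftrightarrow> walk E P \<and> distinct P \<and> length P = Suc (gdist E (hd P) (last P))"

(* Cop positions are a multiset of vertices (the active cops). *)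

(* one cop move: every cop moves to an adjacent vertex (or passes along its loop) *)
inductive cmove :: "('v \<Rightarrow> 'v \<Rightarrow> bool) \<Rightarrow> 'v multiset \<Rightarrow> 'v multiset \<Rightarrow> bool"
  for E where
  cmove_empty: "cmove E {#} {#}"
| cmove_add: "cmove E C C' \<Longrightarrow> E u v \<Longrightarrow> cmove E (add_mset u C) (add_mset v C')"

definition capt :: "('v \<Rightarrow> 'v \<Rightarrow> bool) \<Rightarrow> 'v multiset \<Rightarrow> 'v \<Rightarrow> bool" where
  "capt E C r \<longleftrightarrow> (\<exists>c \<in># C. E c r)"

(* robber moves onto r: if occupied, exactly one cop there is removed *)
definition attack :: "'v multiset \<Rightarrow> 'v \<Rightarrow> 'v multiset" where
  "attack C r = (if r \<in># C then C - {#r#} else C)"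

(* guard_pos E H C r: robber at r is to move, cops C (only these) can ensure forever that
   whenever the robber moves into H the cops capture it in their immediately following move
   (capture in any other situation ends the game, a cop win). Greatest fixed point = safety. *)
coinductive guard_pos :: "('v \<Rightarrow> 'v \<Rightarrow> bool) \<Rightarrow> 'v set \<Rightarrow> 'v multiset \<Rightarrow> 'v \<Rightarrow> bool"
  for E H where
  "(\<forall>r'. E r r' \<longrightarrow>
       capt E (attack C r') r' \<or>
       (r' \<notin> H \<and> (\<exists>C'. cmove E (attack C r') C' \<and> guard_pos E H C' r')))
   \<Longrightarrow> guard_pos E H C r"

definition guarded :: "('v \<Rightarrow> 'v \<Rightarrow> bool) \<Rightarrow> 'v set \<Rightarrow> nat \<Rightarrow> 'v multiset \<Rightarrow> 'v \<Rightarrow> bool" where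
  "guarded E H k C r \<longleftrightarrow>
     (\<exists>D. D \<subseteq># C \<and> size D = k \<and> set_mset D \<subseteq> H \<and> guard_pos E H D r)"

(* reach E H k C r: cops at C (to move), robber at r; the cops can force, in finitely many
   rounds, either a capture or a guarding configuration. Least fixed point = reachability. *)
inductive reach :: "('v \<Rightarrow> 'v \<Rightarrow> bool) \<Rightarrow> 'v set \<Rightarrow> nat \<Rightarrow> 'v multiset \<Rightarrow> 'v \<Rightarrow> bool"
  for E H k where
  reach_capt: "capt E C r \<Longrightarrow> reach E H k C r"
| reach_step: "cmove E C C' \<Longrightarrow>
     guarded E H k C' r \<or> (\<forall>r'. E r r' \<longrightarrow> reach E H k (attack C' r') r') \<Longrightarrow>
     reach E H k C r"

(* (k,t)-guardable: k+t cops are placed, then the robber chooses any vertex (no attack),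
   then play proceeds with the cops moving first. *)
definition guardable :: "('v \<Rightarrow> 'v \<Rightarrow> bool) \<Rightarrow> 'v set \<Rightarrow> nat \<Rightarrow> nat \<Rightarrow> bool" where
  "guardable E H k t \<longleftrightarrow> (\<exists>C0. size C0 = k + t \<and> (\<forall>r0. reach E H k C0 r0))"

end

theory Submission imports Defs begin

lemma guard_inv:
  assumes inv: "Inv c r"
  and step: "\<And>c r r'. Inv c r \<Longrightarrow> E r r' \<Longrightarrow>
      (c \<noteq> r' \<and> E c r') \<or> (c \<noteq> r' \<and> r' \<notin> H \<and> (\<exists>c'. E c c' \<and> Inv c' r'))"
  shows "guard_pos E H {#c#} r"
proof -
  have "\<exists>c. C = {#c#} \<and> Inv c r" if "C = {#c#}" "Inv c r" for C using that by blast
  then have "\<exists>c. {#c#} = {#c#} \<and> Inv c r" using inv by blast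
  show ?thesis
  proof (rule guard_pos.coinduct[where X="\<lambda>C r. \<exists>c. C = {#c#} \<and> Inv c r"])
    show "\<exists>c'. {#c#} = {#c'#} \<and> Inv c' r" using inv by blast
  next
    fix C x
    assume "\<exists>c. C = {#c#} \<and> Inv c x"
    then obtain c where C: "C = {#c#}" and ic: "Inv c x" by blast
    show "\<exists>r C'. C = C' \<and> x = r \<and> (\<forall>r'. E r r' \<longrightarrow> capt E (attack C' r') r' \<or>
           r' \<notin> H \<and> (\<exists>C''. cmove E (attack C' r') C'' \<and>
             ((\<exists>c. C'' = {#c#} \<and> Inv c r') \<or> guard_pos E H C'' r')))"
    proof (intro exI conjI allI impI)
      fix r' assume e: "E x r'"
      from step[OF ic e] show "capt E (attack C r') r' \<or>
           r' \<notin> H \<and> (\<exists>C''. cmove E (attack C r') C'' \<and>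
             ((\<exists>c. C'' = {#c#} \<and> Inv c r') \<or> guard_pos E H C'' r'))"
      proof
        assume "c \<noteq> r' \<and> E c r'"
        then show ?thesis by (auto simp: C attack_def capt_def)
      next
        assume "c \<noteq> r' \<and> r' \<notin> H \<and> (\<exists>c'. E c c' \<and> Inv c' r')"
        then obtain c' where "c \<noteq> r'" "r' \<notin> H" "E c c'" "Inv c' r'" by blast
        then show ?thesis
          by (auto simp: C attack_def capt_def intro!: exI[of _ "{#c'#}"]
              cmove.intros)
      qed
    qed auto
  qed
qed

lemma walk_snoc: "walk E xs \<Longrightarrow> E (last xs) v \<Longrightarrow> walk E (xs @ [v])"
  unfolding walk_def
proof (intro conjI allI impI)
  fix i assume w: "xs \<noteq> [] \<and> (\<forall>i. Suc i < length xs \<longrightarrow> E (xs ! i) (xs ! Suc i))"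
    and l: "E (last xs) v" and i: "Suc i < length (xs @ [v])"
  show "E ((xs @ [v]) ! i) ((xs @ [v]) ! Suc i)"
  proof (cases "Suc i < length xs")
    case True then show ?thesis using w by (simp add: nth_append)
  next
    case False
    then have "i = length xs - 1" using i by simp
    then show ?thesis using w l False by (simp add: nth_append last_conv_nth)
  qed
qed simp

lemma walk_take: "walk E xs \<Longrightarrow> j < length xs \<Longrightarrow> walk E (take (Suc j) xs)"
  unfolding walk_def by auto

lemma walk_exists: "E\<^sup>*\<^sup>* u v \<Longrightarrow> \<exists>xs. walk E xs \<and> hd xs = u \<and> last xs = v"
proof (induction rule: rtranclp_induct)
  case base
  then show ?case by (intro exI[of _ "[u]"]) (simp add: walk_def)
next
  case (step y z)
  then obtain xs where "walk E xs" "hd xs = u" "last xs = y" by blast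
  moreover have "walk E (xs @ [z])" using walk_snoc[of E xs z] step(2) \<open>walk E xs\<close> \<open>last xs = y\<close> by simp
  moreover have "xs \<noteq> []" using \<open>walk E xs\<close> by (simp add: walk_def)
  ultimately show ?case by (intro exI[of _ "xs @ [z]"]) simp
qed

lemma gdist_le: "walk E xs \<Longrightarrow> hd xs = u \<Longrightarrow> last xs = v \<Longrightarrow> gdist E u v \<le> length xs - 1"
  unfolding gdist_def
  by (rule Least_le) (auto simp: walk_def intro!: exI[of _ xs])

lemma gdist_ex: "E\<^sup>*\<^sup>* u v \<Longrightarrow>
   \<exists>xs. walk E xs \<and> hd xs = u \<and> last xs = v \<and> length xs = Suc (gdist E u v)"
proof -
  assume "E\<^sup>*\<^sup>* u v"
  then obtain xs where xs: "walk E xs" "hd xs = u" "last xs = v" using walk_exists by metis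
  have l: "length xs = Suc (length xs - 1)" using xs(1) by (simp add: walk_def)
  have "\<exists>n xs. walk E xs \<and> hd xs = u \<and> last xs = v \<and> length xs = Suc n"
    apply (rule exI[of _ "length xs - 1"])
    apply (rule exI[of _ xs])
    using xs l by simp
  then show ?thesis unfolding gdist_def by (rule LeastI_ex)
qed

lemma gdist_refl: "gdist E u u = 0"
  using gdist_le[of E "[u]" u u] by (simp add: walk_def)

lemma gdist_0: "E\<^sup>*\<^sup>* w v \<Longrightarrow> gdist E w v = 0 \<Longrightarrow> v = w"
proof -
  assume "E\<^sup>*\<^sup>* w v" "gdist E w v = 0"
  then obtain xs where "hd xs = w" "last xs = v" "length xs = Suc 0"
    using gdist_ex[of E w v] by auto
  then show "v = w" by (cases xs) auto
qed

lemma gdist_edge: "E\<^sup>*\<^sup>* w u \<Longrightarrow> E u v \<Longrightarrow> gdist E w v \<le> Suc (gdist E w u)"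
proof -
  assume a: "E\<^sup>*\<^sup>* w u" "E u v"
  then obtain xs where xs: "walk E xs" "hd xs = w" "last xs = u" "length xs = Suc (gdist E w u)"
    using gdist_ex[OF a(1)] by blast
  have w: "walk E (xs @ [v])" using walk_snoc[of E xs v] xs(1,3) a(2) by simp
  have "xs \<noteq> []" using xs(1) by (simp add: walk_def)
  then have "hd (xs @ [v]) = w" using xs(2) by simp
  from gdist_le[OF w this] xs(4) show ?thesis by simp
qed

lemma gdist_pred: "E\<^sup>*\<^sup>* w v \<Longrightarrow> gdist E w v = Suc m \<Longrightarrow> \<exists>u. E u v \<and> gdist E w u \<le> m"
proof -
  assume a: "E\<^sup>*\<^sup>* w v" "gdist E w v = Suc m"
  then obtain xs where xs: "walk E xs" "hd xs = w" "last xs = v" "length xs = Suc (Suc m)"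
    using gdist_ex[OF a(1)] a(2) by auto
  have "walk E (take (Suc m) xs)" using walk_take[OF xs(1)] xs(4) by simp
  moreover have "hd (take (Suc m) xs) = w" using xs by (simp add: hd_take)
  moreover have "last (take (Suc m) xs) = xs ! m" using xs(4)
    by (subst last_conv_nth) (auto simp: min_def)
  ultimately have "gdist E w (xs ! m) \<le> m" using gdist_le[of E "take (Suc m) xs"] xs(4) by simp
  moreover have "E (xs ! m) v" using xs unfolding walk_def by (auto simp: last_conv_nth)
  ultimately show ?thesis by blast
qed

lemma gdist_parity:
  assumes conn: "connected_graph E" and col: "\<forall>u v. E u v \<and> u \<noteq> v \<longrightarrow> col u \<noteq> col v"
  shows "col v = (col w \<noteq> odd (gdist E w v))"
proof -
  have "\<forall>v. gdist E w v = m \<longrightarrow> col v = (col w \<noteq> odd m)" for m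
  proof (induction m)
    case 0
    show ?case
    proof (intro allI impI)
      fix v assume "gdist E w v = 0"
      then have "v = w" using gdist_0[of E w v] conn unfolding connected_graph_def by blast
      then show "col v = (col w \<noteq> odd (0::nat))" by simp
    qed
  next
    case (Suc m)
    show ?case
    proof (intro allI impI)
      fix v assume d: "gdist E w v = Suc m"
      have cc: "\<And>a b. E\<^sup>*\<^sup>* a b" using conn unfolding connected_graph_def by blast
      obtain u where u: "E u v" "gdist E w u \<le> m" using gdist_pred[OF cc d] by blast
      have "gdist E w v \<le> Suc (gdist E w u)" using gdist_edge[OF cc u(1)] .
      then have "gdist E w u = m" using u d by simp
      then have "u \<noteq> v" using d by auto
      then show "col v = (col w \<noteq> odd (Suc m))" using Suc \<open>gdist E w u = m\<close> col u by auto
    qed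
  qed
  then show ?thesis by blast
qed

lemma cmove2: "E a b \<Longrightarrow> E a' b' \<Longrightarrow> cmove E {#a, a'#} {#b, b'#}"
  by (intro cmove.intros)

lemma guard_single:
  assumes refl: "reflexive_graph E"
  shows "guardable E {p} 1 1"
proof -
  have sym: "\<And>u v. E u v \<Longrightarrow> E v u" and rf: "\<And>u. E u u"
    using refl unfolding reflexive_graph_def by blast+
  have gp: "guard_pos E {p} {#p#} r" if "\<not> E p r" for r
  proof (rule guard_inv[where Inv="\<lambda>c r. c = p \<and> \<not> E p r"])
    show "p = p \<and> \<not> E p r" using that by simp
  next
    fix c r r' assume i: "c = p \<and> \<not> E p r" and e: "E r r'"
    show "(c \<noteq> r' \<and> E c r') \<or> (c \<noteq> r' \<and> r' \<notin> {p} \<and> (\<exists>c'. E c c' \<and> c' = p \<and> \<not> E p r'))"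
    proof (cases "E p r'")
      case True
      have "p \<noteq> r'" using i e sym by blast
      then show ?thesis using True i by blast
    next
      case False
      then have "p \<noteq> r'" using rf by blast
      then show ?thesis using False i rf by blast
    qed
  qed
  have "reach E {p} 1 {#p, p#} r" for r
  proof (cases "E p r")
    case True
    then show ?thesis by (intro reach_capt) (simp add: capt_def)
  next
    case False
    have "guarded E {p} 1 {#p, p#} r"
      unfolding guarded_def using gp[OF False] by (intro exI[of _ "{#p#}"]) simp
    then show ?thesis using cmove2[of E p p p p] rf by (intro reach_step) auto
  qed
  then show ?thesis unfolding guardable_def by (intro exI[of _ "{#p, p#}"] conjI allI) auto
qed

definition gsh :: "nat \<Rightarrow> nat \<Rightarrow> nat" where
  "gsh n x = (if x \<le> n then x else if even (x - n) then n else n - 1)"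

lemma gsh_suc: "gsh (n::nat) (Suc x) \<le> Suc (gsh n x) \<and> gsh n x \<le> Suc (gsh n (Suc x))"
proof (cases "Suc x \<le> n")
  case True then show ?thesis by (simp add: gsh_def)
next
  case False
  then have "x \<ge> n" by simp
  then have "Suc x - n = Suc (x - n)" by simp
  then have "even (Suc x - n) = odd (x - n)" by simp
  then show ?thesis using False by (auto simp: gsh_def)
qed

lemma gsh_lip:
  fixes n x y :: nat
  assumes "x \<le> Suc y" "y \<le> Suc x"
  shows "gsh n y \<le> Suc (gsh n x) \<and> gsh n x \<le> Suc (gsh n y)"
proof -
  have "y = x \<or> y = Suc x \<or> x = Suc y" using assms by linarith
  then show ?thesis using gsh_suc[of n x] gsh_suc[of n y] by auto
qed

lemma guard_main:
  fixes E :: "'v \<Rightarrow> 'v \<Rightarrow> bool" and P :: "'v list" and col :: "'v \<Rightarrow> bool"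
  assumes refl: "reflexive_graph E" and conn: "connected_graph E"
    and col: "\<forall>u v. E u v \<and> u \<noteq> v \<longrightarrow> col u \<noteq> col v"
    and wP: "walk E P" and lP: "length P = Suc n" and n1: "n \<ge> 1"
    and dn: "gdist E (P ! 0) (P ! n) = n"
  shows "guardable E (set P) 1 1"
proof -
  have sym: "\<And>u v. E u v \<Longrightarrow> E v u" and rf: "\<And>u. E u u"
    using refl unfolding reflexive_graph_def by blast+
  have cc: "\<And>a b. E\<^sup>*\<^sup>* a b" using conn unfolding connected_graph_def by blast
  define p0 where "p0 = P ! 0"
  define d where "d = gdist E p0"
  define g where "g = gsh n"
  define tgt where "tgt r = P ! g (d r)" for r
  define H where "H = set P"
  have g_le: "g x \<le> n" for x unfolding g_def gsh_def by auto
  have g_par: "even (g x) = even x" for x unfolding g_def gsh_def using n1 by presburger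
  have g_lip': "g y \<le> Suc (g x) \<and> g x \<le> Suc (g y)" if "x \<le> Suc y" "y \<le> Suc x" for x y
    unfolding g_def using gsh_lip[OF that] .
  have g_id: "x \<le> n \<Longrightarrow> g x = x" for x unfolding g_def gsh_def by simp
  have pE: "E (P ! i) (P ! Suc i)" if "i < n" for i
    using wP lP that unfolding walk_def by auto
  have pathE: "E (P ! i) (P ! j)" if "i \<le> n" "j \<le> n" "i \<le> Suc j" "j \<le> Suc i" for i j
  proof -
    have "i = j \<or> i = Suc j \<or> j = Suc i" using that by linarith
    then consider "i = j" | "i = Suc j" | "j = Suc i" by blast
    then show ?thesis
    proof cases
      case 1 then show ?thesis using rf by simp
    next
      case 2 then show ?thesis using pE[of j] sym that by simp
    next
      case 3 then show ?thesis using pE[of i] that by simp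
    qed
  qed
  have dE: "d v \<le> Suc (d u) \<and> d u \<le> Suc (d v)" if "E u v" for u v
    unfolding d_def using gdist_edge[OF cc that] gdist_edge[OF cc sym[OF that]] by simp
  have dcol: "col v = (col p0 \<noteq> odd (d v))" for v
    unfolding d_def using gdist_parity[OF conn col] by blast
  have dne: "even (d u) \<noteq> even (d v)" if "E u v" "u \<noteq> v" for u v
    using dcol[of u] dcol[of v] col that by auto
  have dP_le: "d (P ! j) \<le> j" if "j \<le> n" for j
  proof -
    have w: "walk E (take (Suc j) P)" using walk_take[OF wP] that lP by simp
    have "P \<noteq> []" using lP by auto
    then have h: "hd (take (Suc j) P) = p0" unfolding p0_def by (simp add: hd_conv_nth)
    have l: "last (take (Suc j) P) = P ! j" using that lP
      by (subst last_conv_nth) (auto simp: min_def)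
    show ?thesis using gdist_le[OF w h l] that lP unfolding d_def by simp
  qed
  have dP_mono: "d (P ! k) \<le> d (P ! j) + (k - j)" if "j \<le> k" "k \<le> n" for j k
    using that
  proof (induction k)
    case 0 then show ?case by simp
  next
    case (Suc k)
    show ?case
    proof (cases "j = Suc k")
      case True then show ?thesis by simp
    next
      case False
      then have "j \<le> k" "k < n" using Suc.prems by auto
      then have "d (P ! k) \<le> d (P ! j) + (k - j)" using Suc.IH by simp
      moreover have "d (P ! Suc k) \<le> Suc (d (P ! k))" using dE[OF pE[OF \<open>k < n\<close>]] by simp
      ultimately show ?thesis using \<open>j \<le> k\<close> by simp
    qed
  qed
  have dP: "d (P ! j) = j" if "j \<le> n" for j
  proof -
    have "n \<le> d (P ! j) + (n - j)" using dP_mono[of j n] that dn unfolding d_def p0_def by simp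
    then show ?thesis using dP_le[OF that] that by simp
  qed
  have inH: "\<exists>j\<le>n. r = P ! j" if "r \<in> H" for r
    using that lP unfolding H_def by (auto simp: in_set_conv_nth less_Suc_eq_le)
  have PH: "P ! j \<in> H" if "j \<le> n" for j using that lP unfolding H_def by simp
  have tgtH: "tgt r = r" if "r \<in> H" for r
    using inH[OF that] dP g_id unfolding tgt_def by auto
  have tgt_in: "tgt r \<in> H" for r unfolding tgt_def using PH g_le by simp
  have tgtE: "E (tgt r) (tgt r')" if "E r r'" for r r'
    unfolding tgt_def using pathE[OF g_le g_le] g_lip' dE[OF that] by blast
  have tgt_ne: "tgt r \<noteq> r'" if "E r r'" "r \<noteq> r'" for r r'
  proof
    assume a: "tgt r = r'"
    have "d r' = g (d r)" using dP[OF g_le, of "d r"] a unfolding tgt_def by simp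
    then have "even (d r') = even (d r)" using g_par by simp
    then show False using dne[OF that] by simp
  qed
  have gp: "guard_pos E H {#tgt r#} r" if "r \<notin> H" for r
  proof (rule guard_inv[where Inv="\<lambda>c r. c = tgt r \<and> r \<notin> H"])
    show "tgt r = tgt r \<and> r \<notin> H" using that by simp
  next
    fix c r r' assume i: "c = tgt r \<and> r \<notin> H" and e: "E r r'"
    show "(c \<noteq> r' \<and> E c r') \<or> (c \<noteq> r' \<and> r' \<notin> H \<and> (\<exists>c'. E c c' \<and> c' = tgt r' \<and> r' \<notin> H))"
    proof (cases "r' = r")
      case True
      then have "c \<noteq> r'" using i tgt_in[of r] by auto
      then show ?thesis using True i rf by blast
    next
      case False
      then have ne: "c \<noteq> r'" using i tgt_ne[OF e] by auto
      show ?thesis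
      proof (cases "r' \<in> H")
        case True
        then show ?thesis using ne i tgtE[OF e] tgtH[OF True] by auto
      next
        case False
        then show ?thesis using ne i tgtE[OF e] by auto
      qed
    qed
  qed
  have main: "\<And>i r. n - i = k \<Longrightarrow> i \<le> g (d r) \<Longrightarrow> reach E H 1 {#P ! i, P ! i#} r" for k
  proof (induction k rule: less_induct)
    case (less k i r)
    have i_le: "i \<le> n" using less.prems g_le[of "d r"] by linarith
    show ?case
    proof (cases "capt E {#P ! i, P ! i#} r")
      case True then show ?thesis by (rule reach_capt)
    next
      case nc: False
      define j where "j = g (d r)"
      show ?thesis
      proof (cases "j \<le> Suc i")
        case True
        have jn: "j \<le> n" unfolding j_def by (rule g_le)
        have ij: "i \<le> j" using less.prems unfolding j_def by simp
        have Eij: "E (P ! i) (P ! j)" using pathE[OF i_le jn] True ij by simp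
        have rH: "r \<notin> H"
        proof
          assume "r \<in> H"
          then obtain j' where j': "j' \<le> n" "r = P ! j'" using inH by blast
          then have "j = j'" unfolding j_def using dP g_id by simp
          then have "E (P ! i) r" using Eij j' by simp
          then show False using nc unfolding capt_def by simp
        qed
        have "guarded E H 1 {#P ! j, P ! j#} r"
          unfolding guarded_def using gp[OF rH] PH[OF jn]
          by (intro exI[of _ "{#P ! j#}"]) (simp add: tgt_def j_def)
        then show ?thesis using cmove2[of E "P ! i" "P ! j" "P ! i" "P ! j"] Eij by (intro reach_step) auto
      next
        case False
        then have si: "Suc i \<le> n" using g_le[of "d r"] unfolding j_def by linarith
        have Eii: "E (P ! i) (P ! Suc i)" using pathE[OF i_le si] by simp
        have "reach E H 1 (attack {#P ! Suc i, P ! Suc i#} r') r'" if e: "E r r'" for r'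
        proof (cases "r' = P ! Suc i")
          case True
          then have "attack {#P ! Suc i, P ! Suc i#} r' = {#r'#}" by (simp add: attack_def)
          then show ?thesis using rf by (intro reach_capt) (simp add: capt_def)
        next
          case ne: False
          then have at: "attack {#P ! Suc i, P ! Suc i#} r' = {#P ! Suc i, P ! Suc i#}"
            by (auto simp: attack_def)
          have "g (d r) \<le> Suc (g (d r'))" using g_lip' dE[OF e] by blast
          then have "Suc i \<le> g (d r')" using False unfolding j_def by simp
          moreover have "n - Suc i < k" using less.prems(1) si by simp
          ultimately show ?thesis using less.IH[of "n - Suc i" "Suc i" r'] at by simp
        qed
        then show ?thesis using cmove2[of E "P ! i" "P ! Suc i" "P ! i" "P ! Suc i"] Eii by (intro reach_step) auto
      qed
    qed
  qed
  have "reach E H 1 {#P ! 0, P ! 0#} r" for r using main[of 0 n] by simp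
  then show ?thesis unfolding guardable_def H_def by (intro exI[of _ "{#P ! 0, P ! 0#}"] conjI allI) auto
qed

theorem lemma4:
  fixes E :: "'v::finite \<Rightarrow> 'v \<Rightarrow> bool" and P :: "'v list"
  assumes "reflexive_graph E" and "connected_graph E" and "bipartite_graph E"
    and "geodesic E P"
  shows "guardable E (set P) 1 1"
proof -
  define n where "n = gdist E (hd P) (last P)"
  have wP: "walk E P" and lP: "length P = Suc n"
    using assms(4) unfolding geodesic_def n_def by auto
  obtain col :: "'v \<Rightarrow> bool" where col: "\<forall>u v. E u v \<and> u \<noteq> v \<longrightarrow> col u \<noteq> col v"
    using assms(3) unfolding bipartite_graph_def by blast
  have ne: "P \<noteq> []" using lP by auto
  have h: "hd P = P ! 0" using ne by (simp add: hd_conv_nth)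
  have l: "last P = P ! n" using ne lP by (simp add: last_conv_nth)
  show ?thesis
  proof (cases "n = 0")
    case True
    then have "set P = {P ! 0}" using lP by (cases P) auto
    have "guardable E {P ! 0} 1 1" by (rule guard_single[OF assms(1)])
    then show ?thesis using \<open>set P = {P ! 0}\<close> by (simp only:)
  next
    case False
    then have n1: "n \<ge> 1" by simp
    have "gdist E (hd P) (last P) = n" using n_def by simp
    then have dn: "gdist E (P ! 0) (P ! n) = n" by (simp only: h l)
    show ?thesis by (rule guard_main[OF assms(1,2) col wP lP n1 dn])
  qed
qed

end
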